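(* Let $\epsilon$ be a sequence to which Algorithm A (described below) is applied. Suppose that at some step of the algorithm the current sequence has an occurrence of $p$ or of $q$ at position $i$. Then among the entries of the current sequence in positions $i,i+1,i+2,i+3$, only those in positions $i$ and $i+2$ can have been changed from the original sequence $\epsilon$.
   Context: The reduction of an integer word replaces each occurrence of its $k$-th smallest distinct value by $k-1$; a consecutive pattern $\underline{p_1p_2p_3p_4}$ occurs in a sequence at position $i$ if the reduction of its entries in positions $i,\dots,i+3$ equals $p_1p_2p_3p_4$. Let $p=\underline{0102}$ and $q=\underline{0112}$. Algorithm A, on input an integer sequence $\mathrm{seq}=\epsilon_1\cdots\epsilon_n$: let $E_p$, $E_q$ be the sets of positions of occurrences of $p$, resp. $q$, in the input sequence; set $\mathrm{last}:=$ null. For $i=1,2,\dots,n$ in order: let $N_p,N_q$ be the sets of positions of occurrences of $p$, resp. $q$, in the current sequence. If $i-2\in E_p$: set $\mathrm{last}:=\mathrm{seq}[i]$ and $\mathrm{seq}[i]:=\mathrm{seq}[i-1]$. Else if $i-2\in E_q$: set $\mathrm{last}:=\mathrm{seq}[i]$ and $\mathrm{seq}[i]:=\mathrm{seq}[i-2]$. Else if $i-2\in N_p$ or $i-2\in N_q$: swap the values of $\mathrm{seq}[i]$ and $\mathrm{last}$. Output $\mathrm{seq}$. *)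

theory Defs
  imports Main
begin

definition red :: "int list \<Rightarrow> nat list" where
  "red xs = map (\<lambda>x. card {y \<in> set xs. y < x}) xs"

text \<open>Consecutive pattern occurrence; positions are 0-based list indices
(paper position i corresponds to index i-1).\<close>
definition occurs :: "nat list \<Rightarrow> int list \<Rightarrow> nat \<Rightarrow> bool" where
  "occurs pat s i \<longleftrightarrow> i + length pat \<le> length s \<and> red (take (length pat) (drop i s)) = pat"

definition pat_p :: "nat list" where "pat_p = [0,1,0,2]"
definition pat_q :: "nat list" where "pat_q = [0,1,1,2]"

text \<open>The state is (current sequence, last), last = None meaning null.
E_p, E_q are the occurrences in the original input eps; N_p, N_q those in the
current sequence. Swapping with a null last is never reached; it is modelled
as doing nothing.\<close>
definition algA_step :: "int list \<Rightarrow> int list \<times> int option \<Rightarrow> nat \<Rightarrow> int list \<times> int option" where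
  "algA_step eps st i = (let s = fst st; last = snd st in
     if 2 \<le> i \<and> occurs pat_p eps (i - 2) then (s[i := s ! (i - 1)], Some (s ! i))
     else if 2 \<le> i \<and> occurs pat_q eps (i - 2) then (s[i := s ! (i - 2)], Some (s ! i))
     else if 2 \<le> i \<and> (occurs pat_p s (i - 2) \<or> occurs pat_q s (i - 2)) then
       (case last of Some v \<Rightarrow> (s[i := v], Some (s ! i)) | None \<Rightarrow> (s, last))
     else (s, last))"

definition algA_state :: "int list \<Rightarrow> nat \<Rightarrow> int list \<times> int option" where
  "algA_state eps k = foldl (algA_step eps) (eps, None) [0..<k]"

definition algA :: "int list \<Rightarrow> int list" where
  "algA eps = fst (algA_state eps (length eps))"

end

theory Submission
  imports Defs
begin
lemma take4: "j+4 \<le> length s \<Longrightarrow> take 4 (drop j s) = [s!j, s!(j+1), s!(j+2), s!(j+3)]"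
  by (simp add: take_Suc_conv_app_nth numeral_eq_Suc)
lemma fin4: "finite {y\<in>{a,b,c,d::int}. y<x}" by simp
lemma card0_le: assumes "card {y\<in>{a,b,c,d::int}. y<x} = 0" shows "x \<le> a \<and> x \<le> b \<and> x \<le> c \<and> x \<le> d"
proof -
  have "{y\<in>{a,b,c,d::int}. y<x} = {}" using assms fin4 card_eq_0_iff by metis
  hence "\<forall>y\<in>{a,b,c,d}. \<not> y < x" by blast
  thus ?thesis by simp
qed
lemma red4_eq: "red [a,b,c,d] = [card {y\<in>{a,b,c,d}. y<a}, card {y\<in>{a,b,c,d}. y<b},
   card {y\<in>{a,b,c,d}. y<c}, card {y\<in>{a,b,c,d}. y<d}]"
  by (simp only: red_def list.map list.set)
lemma card2_sub: assumes "S \<subseteq> {a,b::int}" "card S = 2" shows "S = {a,b} \<and> a \<noteq> b"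
proof -
  have ab: "a \<noteq> b"
  proof
    assume "a = b" hence "S \<subseteq> {a}" using assms(1) by simp
    hence "card S \<le> 1" using card_mono[of "{a}" S] by simp
    thus False using assms(2) by simp
  qed
  have "S = {a,b}" using card_subset_eq[OF _ assms(1)] assms(2) ab by simp
  thus ?thesis using ab by simp
qed
lemma card1_sub: assumes "card S = 1" "u \<in> S" "v \<in> S" shows "u = v"
  using assms by (metis card_1_singletonE singletonD)
lemma red4p: "red [a,b,c,d] = [0,1,0,2] \<longleftrightarrow> (a<b \<and> c=a \<and> b<d)"
proof
  assume "red [a,b,c,d] = [0,1,0,2]"
  hence h1: "card {y\<in>{a,b,c,d}. y<a} = 0" and h3: "card {y\<in>{a,b,c,d}. y<c} = 0"
    and h4: "card {y\<in>{a,b,c,d}. y<d} = 2" unfolding red4_eq by simp_all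
  have ca: "a \<le> b" "a \<le> c" "a \<le> d" "c \<le> a" "c \<le> b" "c \<le> d" using card0_le[OF h1] card0_le[OF h3] by auto
  have sub: "{y\<in>{a,b,c,d}. y<d} \<subseteq> {a,b}" using ca by auto
  from card2_sub[OF sub h4] have "a \<noteq> b" "b \<in> {y\<in>{a,b,c,d}. y<d}" by auto
  thus "a<b \<and> c=a \<and> b<d" using ca by auto
next
  assume h: "a<b \<and> c=a \<and> b<d"
  have "{y\<in>{a,b,c,d}. y<a} = {}" "{y\<in>{a,b,c,d}. y<b} = {a}" "{y\<in>{a,b,c,d}. y<d} = {a,b}"
    using h by auto
  thus "red [a,b,c,d] = [0,1,0,2]" using h unfolding red4_eq by simp
qed
lemma red4q: "red [a,b,c,d] = [0,1,1,2] \<longleftrightarrow> (a<b \<and> c=b \<and> b<d)"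
proof
  assume "red [a,b,c,d] = [0,1,1,2]"
  hence h1: "card {y\<in>{a,b,c,d}. y<a} = 0" and h2: "card {y\<in>{a,b,c,d}. y<b} = 1"
    and h3: "card {y\<in>{a,b,c,d}. y<c} = 1" and h4: "card {y\<in>{a,b,c,d}. y<d} = 2"
    unfolding red4_eq by simp_all
  have ca: "a \<le> b" "a \<le> c" "a \<le> d" using card0_le[OF h1] by auto
  have ab: "a < b"
  proof (rule ccontr)
    assume "\<not> a < b" hence "b \<le> a \<and> b \<le> b \<and> b \<le> c \<and> b \<le> d" using ca by auto
    hence "{y\<in>{a,b,c,d}. y<b} = {}" by auto
    thus False using h2 by (metis card.empty zero_neq_one)
  qed
  have ac: "a < c"
  proof (rule ccontr)
    assume "\<not> a < c" hence "c \<le> a \<and> c \<le> b \<and> c \<le> c \<and> c \<le> d" using ca by auto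
    hence "{y\<in>{a,b,c,d}. y<c} = {}" by auto
    thus False using h3 by (metis card.empty zero_neq_one)
  qed
  have "\<not> c < b"
  proof
    assume "c < b"
    hence "c = a" using card1_sub[OF h2, of c a] ab by simp
    thus False using ac by simp
  qed
  moreover have "\<not> b < c"
  proof
    assume "b < c"
    hence "b = a" using card1_sub[OF h3, of b a] ac by simp
    thus False using ab by simp
  qed
  ultimately have cb: "c = b" by simp
  have sub: "{y\<in>{a,b,c,d}. y<d} \<subseteq> {a,b}" using ca cb by auto
  from card2_sub[OF sub h4] have "b \<in> {y\<in>{a,b,c,d}. y<d}" by auto
  thus "a<b \<and> c=b \<and> b<d" using ab cb by auto
next
  assume h: "a<b \<and> c=b \<and> b<d"
  have "{y\<in>{a,b,c,d}. y<a} = {}" "{y\<in>{a,b,c,d}. y<b} = {a}" "{y\<in>{a,b,c,d}. y<d} = {a,b}"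
    using h by auto
  thus "red [a,b,c,d] = [0,1,1,2]" using h unfolding red4_eq by simp
qed

lemma occ_p: "occurs pat_p s j \<longleftrightarrow> j+4 \<le> length s \<and> s!j < s!(j+1) \<and> s!(j+2) = s!j \<and> s!(j+1) < s!(j+3)"
proof (cases "j+4 \<le> length s")
  case True
  have L: "length pat_p = 4" by (simp add: pat_p_def)
  have "occurs pat_p s j = (red (take 4 (drop j s)) = pat_p)" unfolding occurs_def L using True by simp
  also have "... = (red [s!j, s!(j+1), s!(j+2), s!(j+3)] = [0,1,0,2])" by (simp only: take4[OF True] pat_p_def)
  also have "... = (s!j < s!(j+1) \<and> s!(j+2) = s!j \<and> s!(j+1) < s!(j+3))" by (rule red4p)
  finally show ?thesis using True by simp
qed (simp add: occurs_def pat_p_def)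
lemma occ_q: "occurs pat_q s j \<longleftrightarrow> j+4 \<le> length s \<and> s!j < s!(j+1) \<and> s!(j+2) = s!(j+1) \<and> s!(j+1) < s!(j+3)"
proof (cases "j+4 \<le> length s")
  case True
  have L: "length pat_q = 4" by (simp add: pat_q_def)
  have "occurs pat_q s j = (red (take 4 (drop j s)) = pat_q)" unfolding occurs_def L using True by simp
  also have "... = (red [s!j, s!(j+1), s!(j+2), s!(j+3)] = [0,1,1,2])" by (simp only: take4[OF True] pat_q_def)
  also have "... = (s!j < s!(j+1) \<and> s!(j+2) = s!(j+1) \<and> s!(j+1) < s!(j+3))" by (rule red4q)
  finally show ?thesis using True by simp
qed (simp add: occurs_def pat_q_def)

definition OC :: "int list \<Rightarrow> nat \<Rightarrow> bool" where
  "OC s j \<longleftrightarrow> j+4 \<le> length s \<and> s!j < s!(j+1) \<and> s!(j+1) < s!(j+3) \<and> (s!(j+2) = s!j \<or> s!(j+2) = s!(j+1))"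

lemma OC_iff: "OC s j \<longleftrightarrow> occurs pat_p s j \<or> occurs pat_q s j"
  unfolding OC_def occ_p occ_q by auto

definition Inv :: "int list \<Rightarrow> nat \<Rightarrow> int list \<Rightarrow> int option \<Rightarrow> bool" where
  "Inv e k s l \<longleftrightarrow> length s = length e \<and> (\<forall>i. k \<le> i \<longrightarrow> i < length e \<longrightarrow> s!i = e!i)
    \<and> (\<forall>j. OC s j \<longrightarrow> s!(j+1) = e!(j+1) \<and> s!(j+3) = e!(j+3))
    \<and> (\<forall>m<k. s!m \<noteq> e!m \<longrightarrow> 2 \<le> m \<and> m+1 < length e \<and> e!m \<le> e!(m-1) \<and> e!(m-1) < e!(m+1)
           \<and> s!m < e!(m+1) \<and> s!(m-1) = e!(m-1))
    \<and> (2 \<le> k \<longrightarrow> s!(k-2) \<noteq> e!(k-2) \<longrightarrow> s!(k-1) = e!(k-1) \<and> l = Some (e!(k-2)))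
    \<and> (1 \<le> k \<longrightarrow> s!(k-1) \<noteq> e!(k-1) \<longrightarrow> l = Some (e!(k-1)))"

lemma OC_upd_far:
  assumes "OC (s[k:=x]) j" "k < j \<or> j+3 < k"
  shows "OC s j"
  using assms unfolding OC_def by auto

lemma preserve:
  assumes I: "Inv e k s l" and k: "k < length e"
    and G1: "x \<noteq> e!k \<Longrightarrow> 2 \<le> k \<and> k+1 < length e \<and> e!k \<le> e!(k-1) \<and> e!(k-1) < e!(k+1)
              \<and> x < e!(k+1) \<and> s!(k-1) = e!(k-1) \<and> l' = Some (e!k)"
    and G2: "\<And>j. x \<noteq> e!k \<Longrightarrow> k = j+1 \<or> k = j+3 \<Longrightarrow> \<not> OC (s[k:=x]) j"
    and G4: "1 \<le> k \<Longrightarrow> s!(k-1) \<noteq> e!(k-1) \<Longrightarrow> x = e!k \<and> l' = Some (e!(k-1))"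
    and G5: "x = e!k \<Longrightarrow> l' = l"
  shows "Inv e (Suc k) (s[k:=x]) l'"
proof -
  have len: "length s = length e" and I1: "\<forall>i. k \<le> i \<longrightarrow> i < length e \<longrightarrow> s!i = e!i"
    and I2: "\<forall>j. OC s j \<longrightarrow> s!(j+1) = e!(j+1) \<and> s!(j+3) = e!(j+3)"
    and I4: "\<forall>m<k. s!m \<noteq> e!m \<longrightarrow> 2 \<le> m \<and> m+1 < length e \<and> e!m \<le> e!(m-1) \<and> e!(m-1) < e!(m+1)
           \<and> s!m < e!(m+1) \<and> s!(m-1) = e!(m-1)"
    and I5: "2 \<le> k \<longrightarrow> s!(k-2) \<noteq> e!(k-2) \<longrightarrow> s!(k-1) = e!(k-1) \<and> l = Some (e!(k-2))"
    and I6: "1 \<le> k \<longrightarrow> s!(k-1) \<noteq> e!(k-1) \<longrightarrow> l = Some (e!(k-1))"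
    using I unfolding Inv_def by blast+
  let ?s = "s[k:=x]"
  have sk: "s!k = e!k" using I1 k by simp
  show ?thesis
  proof (cases "x = e!k")
    case True
    hence "?s = s" using sk by (metis list_update_id)
    moreover have "l' = l" using G5 True .
    ultimately have e: "?s = s" "l' = l" by simp_all
    have B4: "\<forall>m<Suc k. s!m \<noteq> e!m \<longrightarrow> 2 \<le> m \<and> m+1 < length e \<and> e!m \<le> e!(m-1) \<and> e!(m-1) < e!(m+1)
           \<and> s!m < e!(m+1) \<and> s!(m-1) = e!(m-1)"
      using I4 sk less_Suc_eq by auto
    have B2: "\<forall>i. Suc k \<le> i \<longrightarrow> i < length e \<longrightarrow> s!i = e!i" using I1 by auto
    have B5: "2 \<le> Suc k \<longrightarrow> s!(Suc k-2) \<noteq> e!(Suc k-2) \<longrightarrow> s!(Suc k-1) = e!(Suc k-1) \<and> l = Some (e!(Suc k-2))"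
      using I6 sk by auto
    have B6: "1 \<le> Suc k \<longrightarrow> s!(Suc k-1) \<noteq> e!(Suc k-1) \<longrightarrow> l = Some (e!(Suc k-1))"
      using sk by simp
    show ?thesis unfolding e Inv_def using len B2 I2 B4 B5 B6 by blast
  next
    case ch: False
    note g1 = G1[OF ch]
    have A1: "length ?s = length e" using len by simp
    have A2: "\<forall>i. Suc k \<le> i \<longrightarrow> i < length e \<longrightarrow> ?s!i = e!i" using I1 by auto
    have A3: "\<forall>j. OC ?s j \<longrightarrow> ?s!(j+1) = e!(j+1) \<and> ?s!(j+3) = e!(j+3)"
    proof (intro allI impI)
      fix j assume oc: "OC ?s j"
      have jl: "j+4 \<le> length e" using oc len unfolding OC_def by simp
      consider "k < j \<or> j+3 < k" | "k = j" | "k = j+1" | "k = j+2" | "k = j+3" by linarith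
      thus "?s!(j+1) = e!(j+1) \<and> ?s!(j+3) = e!(j+3)"
      proof cases
        case 1
        hence "OC s j" using OC_upd_far oc by blast
        thus ?thesis using I2 1 by auto
      next
        case 2 thus ?thesis using I1 jl by auto
      next
        case 3 thus ?thesis using G2[OF ch] oc by blast
      next
        case 4 thus ?thesis using I1 jl g1 by auto
      next
        case 5 thus ?thesis using G2[OF ch] oc by blast
      qed
    qed
    have A4: "\<forall>m<Suc k. ?s!m \<noteq> e!m \<longrightarrow> 2 \<le> m \<and> m+1 < length e \<and> e!m \<le> e!(m-1) \<and> e!(m-1) < e!(m+1)
           \<and> ?s!m < e!(m+1) \<and> ?s!(m-1) = e!(m-1)"
    proof (intro allI impI)
      fix m assume m: "m < Suc k" "?s!m \<noteq> e!m"
      show "2 \<le> m \<and> m+1 < length e \<and> e!m \<le> e!(m-1) \<and> e!(m-1) < e!(m+1)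
           \<and> ?s!m < e!(m+1) \<and> ?s!(m-1) = e!(m-1)"
      proof (cases "m = k")
        case True thus ?thesis using g1 len k by auto
      next
        case False
        hence "m < k" using m by simp
        thus ?thesis using I4 m by auto
      qed
    qed
    have A5: "2 \<le> Suc k \<longrightarrow> ?s!(Suc k-2) \<noteq> e!(Suc k-2) \<longrightarrow> ?s!(Suc k-1) = e!(Suc k-1) \<and> l' = Some (e!(Suc k-2))"
    proof (intro impI)
      assume "2 \<le> Suc k" "?s!(Suc k-2) \<noteq> e!(Suc k-2)"
      hence "1 \<le> k" "s!(k-1) \<noteq> e!(k-1)" by auto
      thus "?s!(Suc k-1) = e!(Suc k-1) \<and> l' = Some (e!(Suc k-2))" using G4 ch by auto
    qed
    have A6: "1 \<le> Suc k \<longrightarrow> ?s!(Suc k-1) \<noteq> e!(Suc k-1) \<longrightarrow> l' = Some (e!(Suc k-1))"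
      using g1 by simp
    show ?thesis unfolding Inv_def using A1 A2 A3 A4 A5 A6 by blast
  qed
qed

lemma step_inv:
  assumes I: "Inv e k s l" and k: "k < length e"
  shows "Inv e (Suc k) (fst (algA_step e (s,l) k)) (snd (algA_step e (s,l) k))"
proof -
  have len: "length s = length e" and I1: "\<forall>i. k \<le> i \<longrightarrow> i < length e \<longrightarrow> s!i = e!i"
    and I2: "\<forall>j. OC s j \<longrightarrow> s!(j+1) = e!(j+1) \<and> s!(j+3) = e!(j+3)"
    and I4: "\<forall>m<k. s!m \<noteq> e!m \<longrightarrow> 2 \<le> m \<and> m+1 < length e \<and> e!m \<le> e!(m-1) \<and> e!(m-1) < e!(m+1)
           \<and> s!m < e!(m+1) \<and> s!(m-1) = e!(m-1)"
    and I5: "2 \<le> k \<longrightarrow> s!(k-2) \<noteq> e!(k-2) \<longrightarrow> s!(k-1) = e!(k-1) \<and> l = Some (e!(k-2))"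
    and I6: "1 \<le> k \<longrightarrow> s!(k-1) \<noteq> e!(k-1) \<longrightarrow> l = Some (e!(k-1))"
    using I unfolding Inv_def by blast+
  have sk: "s!k = e!k" using I1 k by simp
  consider (A) "2 \<le> k" "occurs pat_p e (k-2)"
    | (B) "2 \<le> k" "\<not> occurs pat_p e (k-2)" "occurs pat_q e (k-2)"
    | (C) "2 \<le> k" "\<not> occurs pat_p e (k-2)" "\<not> occurs pat_q e (k-2)" "occurs pat_p s (k-2) \<or> occurs pat_q s (k-2)"
    | (D) "\<not> (2 \<le> k \<and> (occurs pat_p e (k-2) \<or> occurs pat_q e (k-2) \<or> occurs pat_p s (k-2) \<or> occurs pat_q s (k-2)))"
    by blast
  thus ?thesis
  proof cases
    case A
    have st: "algA_step e (s,l) k = (s[k := s!(k-1)], Some (s!k))" using A by (simp add: algA_step_def)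
    obtain j where kj: "k = Suc (Suc j)" using A(1) by (metis add_2_eq_Suc le_Suc_ex)
    have o: "j+4 \<le> length e" "e!j < e!(j+1)" "e!(j+2) = e!j" "e!(j+1) < e!(j+3)"
      using A(2) unfolding occ_p kj by simp_all
    have s1: "s!(j+1) = e!(j+1)"
    proof (rule ccontr)
      assume "s!(j+1) \<noteq> e!(j+1)"
      hence "e!(j+1) \<le> e!j" using I4 kj by auto
      thus False using o by simp
    qed
    have "Inv e (Suc k) (s[k := s!(k-1)]) (Some (s!k))"
    proof (rule preserve[OF I k])
      show "s!(k-1) \<noteq> e!k \<Longrightarrow> 2 \<le> k \<and> k+1 < length e \<and> e!k \<le> e!(k-1) \<and> e!(k-1) < e!(k+1)
              \<and> s!(k-1) < e!(k+1) \<and> s!(k-1) = e!(k-1) \<and> Some (s!k) = Some (e!k)"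
        using o s1 sk kj by (simp add: numeral_eq_Suc)
      show "\<And>i. s!(k-1) \<noteq> e!k \<Longrightarrow> k = i+1 \<or> k = i+3 \<Longrightarrow> \<not> OC (s[k:=s!(k-1)]) i"
        using kj len k unfolding OC_def by (auto simp: nth_list_update)
      show "1 \<le> k \<Longrightarrow> s!(k-1) \<noteq> e!(k-1) \<Longrightarrow> s!(k-1) = e!k \<and> Some (s!k) = Some (e!(k-1))"
        using s1 kj by simp
      show "s!(k-1) = e!k \<Longrightarrow> Some (s!k) = l" using s1 kj o by simp
    qed
    thus ?thesis using st by simp
  next
    case B
    have st: "algA_step e (s,l) k = (s[k := s!(k-2)], Some (s!k))" using B by (simp add: algA_step_def)
    obtain j where kj: "k = Suc (Suc j)" using B(1) by (metis add_2_eq_Suc le_Suc_ex)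
    have o: "j+4 \<le> length e" "e!j < e!(j+1)" "e!(j+2) = e!(j+1)" "e!(j+1) < e!(j+3)"
      using B(3) unfolding occ_q kj by simp_all
    have s1: "s!(j+1) = e!(j+1)"
    proof (rule ccontr)
      assume "s!(j+1) \<noteq> e!(j+1)"
      hence "e!(j+1) \<le> e!j" using I4 kj by auto
      thus False using o by simp
    qed
    have xl: "s!j < e!(j+1)"
    proof (cases "s!j = e!j")
      case True thus ?thesis using o by simp
    next
      case False thus ?thesis using I4 kj by auto
    qed
    have "Inv e (Suc k) (s[k := s!(k-2)]) (Some (s!k))"
    proof (rule preserve[OF I k])
      show "s!(k-2) \<noteq> e!k \<Longrightarrow> 2 \<le> k \<and> k+1 < length e \<and> e!k \<le> e!(k-1) \<and> e!(k-1) < e!(k+1)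
              \<and> s!(k-2) < e!(k+1) \<and> s!(k-1) = e!(k-1) \<and> Some (s!k) = Some (e!k)"
        using o s1 sk kj xl by (simp add: numeral_eq_Suc)
      show "\<And>i. s!(k-2) \<noteq> e!k \<Longrightarrow> k = i+1 \<or> k = i+3 \<Longrightarrow> \<not> OC (s[k:=s!(k-2)]) i"
        using kj len k s1 xl unfolding OC_def by (auto simp: nth_list_update)
      show "1 \<le> k \<Longrightarrow> s!(k-1) \<noteq> e!(k-1) \<Longrightarrow> s!(k-2) = e!k \<and> Some (s!k) = Some (e!(k-1))"
        using s1 kj by simp
      show "s!(k-2) = e!k \<Longrightarrow> Some (s!k) = l" using xl kj o by simp
    qed
    thus ?thesis using st by simp
  next
    case C
    obtain j where kj: "k = Suc (Suc j)" using C(1) by (metis add_2_eq_Suc le_Suc_ex)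
    have oc: "OC s j" using C(4) OC_iff kj by simp
    have s1: "s!(j+1) = e!(j+1)" using I2 oc by blast
    have jl: "j+4 \<le> length e" using oc len unfolding OC_def by simp
    have s23: "s!(j+2) = e!(j+2)" "s!(j+3) = e!(j+3)" using I1 kj jl by auto
    have s0: "s!j \<noteq> e!j"
    proof
      assume "s!j = e!j"
      hence "OC e j" using oc s1 s23 len unfolding OC_def by simp
      thus False using C(2,3) OC_iff kj by simp
    qed
    have lv: "l = Some (e!j)" using I5 s0 kj by simp
    have i4: "2 \<le> j" "e!j \<le> e!(j-1)" "e!(j-1) < e!(j+1)" "s!j < e!(j+1)" using I4 kj s0 by auto
    have st: "algA_step e (s,l) k = (s[k := e!j], Some (s!k))" using C lv kj by (simp add: algA_step_def)
    have oc': "s!j < e!(j+1)" "e!(j+1) < e!(j+3)" "e!(j+2) = s!j \<or> e!(j+2) = e!(j+1)"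
      using oc s1 s23 unfolding OC_def by auto
    have xne: "e!j \<noteq> e!k" using oc' i4 s0 kj by auto
    have "Inv e (Suc k) (s[k := e!j]) (Some (s!k))"
    proof (rule preserve[OF I k])
      show "e!j \<noteq> e!k \<Longrightarrow> 2 \<le> k \<and> k+1 < length e \<and> e!k \<le> e!(k-1) \<and> e!(k-1) < e!(k+1)
              \<and> e!j < e!(k+1) \<and> s!(k-1) = e!(k-1) \<and> Some (s!k) = Some (e!k)"
        using oc' s1 sk kj i4 jl by (auto simp: numeral_eq_Suc)
      show "\<And>i. e!j \<noteq> e!k \<Longrightarrow> k = i+1 \<or> k = i+3 \<Longrightarrow> \<not> OC (s[k:=e!j]) i"
        using kj len k s1 i4 oc unfolding OC_def by (auto simp: nth_list_update)
      show "1 \<le> k \<Longrightarrow> s!(k-1) \<noteq> e!(k-1) \<Longrightarrow> e!j = e!k \<and> Some (s!k) = Some (e!(k-1))"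
        using s1 kj by simp
      show "e!j = e!k \<Longrightarrow> Some (s!k) = l" using xne by simp
    qed
    thus ?thesis using st by simp
  next
    case D
    have st: "algA_step e (s,l) k = (s[k := e!k], l)" using D sk
      by (auto simp: algA_step_def) (metis list_update_id)+
    have "Inv e (Suc k) (s[k := e!k]) l"
    proof (rule preserve[OF I k])
      show "1 \<le> k \<Longrightarrow> s!(k-1) \<noteq> e!(k-1) \<Longrightarrow> e!k = e!k \<and> l = Some (e!(k-1))"
        using I6 by simp
    qed simp_all
    thus ?thesis using st by simp
  qed
qed

lemma state_Suc: "algA_state e (Suc k) = algA_step e (algA_state e k) k"
  by (simp add: algA_state_def)

lemma inv_all: "k \<le> length e \<Longrightarrow> Inv e k (fst (algA_state e k)) (snd (algA_state e k))"
proof (induction k)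
  case 0
  show ?case by (simp add: algA_state_def Inv_def)
next
  case (Suc k)
  hence "Inv e k (fst (algA_state e k)) (snd (algA_state e k))" by simp
  from step_inv[OF this] Suc.prems show ?case
    by (simp add: state_Suc)
qed

theorem lemma3:
  fixes eps :: "int list" and k j :: nat
  assumes "k \<le> length eps"
    and "occurs pat_p (fst (algA_state eps k)) j \<or> occurs pat_q (fst (algA_state eps k)) j"
  shows "fst (algA_state eps k) ! (j + 1) = eps ! (j + 1)
       \<and> fst (algA_state eps k) ! (j + 3) = eps ! (j + 3)"
proof -
  have "Inv eps k (fst (algA_state eps k)) (snd (algA_state eps k))" using inv_all assms(1) .
  moreover have "OC (fst (algA_state eps k)) j" using assms(2) OC_iff by blast
  ultimately show ?thesis unfolding Inv_def by blast
qed
end
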